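(* Let $\Omega\subset\mathbb{R}^N$ be a bounded domain with smooth boundary, $a>0$, $b\in L^\infty(\Omega)$ nonnegative, and suppose there is an open set $\Omega_0$ with smooth boundary such that $b=0$ a.e. on $\Omega_0$ and for every open $\Omega'\Subset\Omega\setminus\Omega_0$ there is $\underline b>0$ with $b\ge\underline b$ a.e. on $\Omega'$. Let $u_0\in H_0^1(\Omega)\cap L^\infty(\Omega)$ with $0\le u_0\le1$ a.e. in $\Omega\setminus\Omega_0$, and for $p>1$ let $u_p$ be the unique global positive solution of $\partial_tu-\Delta u=au-b(x)u^p$ in $\Omega\times(0,\infty)$, $u=0$ on $\partial\Omega\times(0,\infty)$, $u(0)=u_0$. Let $u$ be a limit of $u_p$ as $p\to+\infty$ along a subsequence, in the sense that for every $T>0$, $u_p\to u$ strongly in $L^2(\Omega\times(0,T))$, weakly in $L^2(0,T;H_0^1(\Omega))$, and $\partial_tu_p\rightharpoonup\partial_tu$ weakly in $L^2(\Omega\times(0,T))$. Then $u(t)\in\mathbb{K}_0$ for a.e. $t>0$, where $\mathbb{K}_0=\{w\in H_0^1(\Omega):w\le1\text{ a.e. in }\Omega\setminus\Omega_0\}$. *)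

theory Defs
  imports "HOL-Analysis.Analysis"
begin

coinductive smooth_on :: "'a::real_normed_vector set \<Rightarrow> ('a \<Rightarrow> real) \<Rightarrow> bool" where
  "(\<forall>x\<in>U. f differentiable (at x)) \<Longrightarrow>
   (\<forall>v. smooth_on U (\<lambda>x. frechet_derivative f (at x) v)) \<Longrightarrow> smooth_on U f"

definition test_fun :: "'a::euclidean_space set \<Rightarrow> ('a \<Rightarrow> real) \<Rightarrow> bool" where
  "test_fun U \<phi> \<longleftrightarrow> smooth_on UNIV \<phi> \<and> compact (closure {x. \<phi> x \<noteq> 0})
      \<and> closure {x. \<phi> x \<noteq> 0} \<subseteq> U"

definition grad :: "('a::euclidean_space \<Rightarrow> real) \<Rightarrow> 'a \<Rightarrow> 'a" where
  "grad \<phi> x = (\<Sum>i\<in>Basis. frechet_derivative \<phi> (at x) i *\<^sub>R i)"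

definition gradx :: "(real \<times> 'a::euclidean_space \<Rightarrow> real) \<Rightarrow> real \<times> 'a \<Rightarrow> 'a" where
  "gradx \<psi> z = (\<Sum>i\<in>Basis. frechet_derivative \<psi> (at z) (0, i) *\<^sub>R i)"

definition dt :: "(real \<times> 'a::euclidean_space \<Rightarrow> real) \<Rightarrow> real \<times> 'a \<Rightarrow> real" where
  "dt \<psi> z = frechet_derivative \<psi> (at z) (1, 0)"

definition smooth_boundary :: "'a::euclidean_space set \<Rightarrow> bool" where
  "smooth_boundary \<Omega> \<longleftrightarrow> (\<forall>x0\<in>frontier \<Omega>. \<exists>U \<rho>. open U \<and> x0 \<in> U \<and> smooth_on U \<rho> \<and>
      (\<forall>x\<in>U. grad \<rho> x \<noteq> 0) \<and> \<Omega> \<inter> U = {x\<in>U. \<rho> x < 0})"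

definition smooth_domain :: "'a::euclidean_space set \<Rightarrow> bool" where
  "smooth_domain \<Omega> \<longleftrightarrow> open \<Omega> \<and> connected \<Omega> \<and> \<Omega> \<noteq> {} \<and> bounded \<Omega> \<and> smooth_boundary \<Omega>"

definition L2_on :: "'b::euclidean_space set \<Rightarrow> ('b \<Rightarrow> real) \<Rightarrow> bool" where
  "L2_on S f \<longleftrightarrow> set_borel_measurable lborel S f \<and> set_integrable lborel S (\<lambda>x. (f x)\<^sup>2)"

definition L2v_on :: "'b::euclidean_space set \<Rightarrow> ('b \<Rightarrow> 'c::euclidean_space) \<Rightarrow> bool" where
  "L2v_on S g \<longleftrightarrow> set_borel_measurable lborel S g \<and> set_integrable lborel S (\<lambda>x. (norm (g x))\<^sup>2)"

definition Linfty_on :: "'b::euclidean_space set \<Rightarrow> ('b \<Rightarrow> real) \<Rightarrow> bool" where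
  "Linfty_on S f \<longleftrightarrow> set_borel_measurable lborel S f \<and> (\<exists>M. AE x in lborel. x \<in> S \<longrightarrow> \<bar>f x\<bar> \<le> M)"

definition H01_grad :: "'a::euclidean_space set \<Rightarrow> ('a \<Rightarrow> real) \<Rightarrow> ('a \<Rightarrow> 'a) \<Rightarrow> bool" where
  "H01_grad \<Omega> w g \<longleftrightarrow> L2_on \<Omega> w \<and> L2v_on \<Omega> g \<and>
     (\<exists>\<phi>. (\<forall>k. test_fun \<Omega> (\<phi> k)) \<and>
        (\<lambda>k. LINT x:\<Omega>|lborel. (\<phi> k x - w x)\<^sup>2) \<longlonglongrightarrow> 0 \<and>
        (\<lambda>k. LINT x:\<Omega>|lborel. (norm (grad (\<phi> k) x - g x))\<^sup>2) \<longlonglongrightarrow> 0)"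

definition H01 :: "'a::euclidean_space set \<Rightarrow> ('a \<Rightarrow> real) \<Rightarrow> bool" where
  "H01 \<Omega> w \<longleftrightarrow> (\<exists>g. H01_grad \<Omega> w g)"

definition K0 :: "'a::euclidean_space set \<Rightarrow> 'a set \<Rightarrow> ('a \<Rightarrow> real) set" where
  "K0 \<Omega> \<Omega>0 = {w. H01 \<Omega> w \<and> (AE x in lborel. x \<in> \<Omega> - \<Omega>0 \<longrightarrow> w x \<le> 1)}"

text \<open>Space-time cylinder Omega x (0,T), written with time first.\<close>
definition cyl :: "'a::euclidean_space set \<Rightarrow> real \<Rightarrow> (real \<times> 'a) set" where
  "cyl \<Omega> T = {0<..<T} \<times> \<Omega>"

definition L2H01 :: "'a::euclidean_space set \<Rightarrow> real \<Rightarrow> (real \<Rightarrow> 'a \<Rightarrow> real) \<Rightarrow> (real \<Rightarrow> 'a \<Rightarrow> 'a) \<Rightarrow> bool" where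
  "L2H01 \<Omega> T u G \<longleftrightarrow> L2_on (cyl \<Omega> T) (\<lambda>z. u (fst z) (snd z)) \<and>
     L2v_on (cyl \<Omega> T) (\<lambda>z. G (fst z) (snd z)) \<and>
     (AE t in lborel. t \<in> {0<..<T} \<longrightarrow> H01_grad \<Omega> (u t) (G t))"

definition time_deriv :: "'a::euclidean_space set \<Rightarrow> real \<Rightarrow> (real \<Rightarrow> 'a \<Rightarrow> real) \<Rightarrow> (real \<Rightarrow> 'a \<Rightarrow> real) \<Rightarrow> bool" where
  "time_deriv \<Omega> T u D \<longleftrightarrow> L2_on (cyl \<Omega> T) (\<lambda>z. D (fst z) (snd z)) \<and>
     (\<forall>\<psi>. test_fun (cyl \<Omega> T) \<psi> \<longrightarrow>
        (LINT z:cyl \<Omega> T|lborel. u (fst z) (snd z) * dt \<psi> z)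
          = - (LINT z:cyl \<Omega> T|lborel. D (fst z) (snd z) * \<psi> z))"

definition global_solution ::
  "'a::euclidean_space set \<Rightarrow> real \<Rightarrow> ('a \<Rightarrow> real) \<Rightarrow> real \<Rightarrow> ('a \<Rightarrow> real) \<Rightarrow>
   (real \<Rightarrow> 'a \<Rightarrow> real) \<Rightarrow> (real \<Rightarrow> 'a \<Rightarrow> 'a) \<Rightarrow> (real \<Rightarrow> 'a \<Rightarrow> real) \<Rightarrow> bool" where
  "global_solution \<Omega> a b p u0 u G D \<longleftrightarrow>
     (\<forall>T>0. L2H01 \<Omega> T u G \<and> time_deriv \<Omega> T u D \<and>
        Linfty_on (cyl \<Omega> T) (\<lambda>z. u (fst z) (snd z)) \<and>
        (\<forall>\<psi>. test_fun (cyl \<Omega> T) \<psi> \<longrightarrow>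
           (LINT z:cyl \<Omega> T|lborel. D (fst z) (snd z) * \<psi> z + G (fst z) (snd z) \<bullet> gradx \<psi> z)
           = (LINT z:cyl \<Omega> T|lborel.
                (a * u (fst z) (snd z) - b (snd z) * u (fst z) (snd z) powr p) * \<psi> z))) \<and>
     (AE z in lborel. z \<in> {0<..} \<times> \<Omega> \<longrightarrow> u (fst z) (snd z) \<ge> 0) \<and>
     ((\<lambda>t. LINT x:\<Omega>|lborel. (u t x - u0 x)\<^sup>2) \<longlongrightarrow> 0) (at_right 0)"

definition weak_L2 :: "'b::euclidean_space set \<Rightarrow> (nat \<Rightarrow> 'b \<Rightarrow> real) \<Rightarrow> ('b \<Rightarrow> real) \<Rightarrow> bool" where
  "weak_L2 S F f \<longleftrightarrow> (\<forall>\<psi>. L2_on S \<psi> \<longrightarrow>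
     (\<lambda>k. LINT x:S|lborel. F k x * \<psi> x) \<longlonglongrightarrow> (LINT x:S|lborel. f x * \<psi> x))"

definition weak_L2v :: "'b::euclidean_space set \<Rightarrow> (nat \<Rightarrow> 'b \<Rightarrow> 'c::euclidean_space) \<Rightarrow> ('b \<Rightarrow> 'c) \<Rightarrow> bool" where
  "weak_L2v S F f \<longleftrightarrow> (\<forall>\<Psi>. L2v_on S \<Psi> \<longrightarrow>
     (\<lambda>k. LINT x:S|lborel. F k x \<bullet> \<Psi> x) \<longlonglongrightarrow> (LINT x:S|lborel. f x \<bullet> \<Psi> x))"

end

theory Submission
  imports Defs
begin

fun Qp :: "nat \<Rightarrow> real poly" where
  "Qp 0 = 1"
| "Qp (Suc k) = [:0,0,1:] * (Qp k - pderiv (Qp k))"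

definition Ef :: "nat \<Rightarrow> real \<Rightarrow> real" where
  "Ef k s = (if s > 0 then poly (Qp k) (inverse s) * exp (- inverse s) else 0)"

lemma poly_div_exp_0: "((\<lambda>x. poly P x / exp x) \<longlongrightarrow> (0::real)) at_top"
proof -
  have "((\<lambda>x. \<Sum>i\<le>degree P. coeff P i * (x ^ i / exp x)) \<longlongrightarrow> (\<Sum>i\<le>degree P. coeff P i * 0)) at_top"
    by (intro tendsto_sum tendsto_mult tendsto_const tendsto_power_div_exp_0)
  then show ?thesis
    by (simp add: poly_altdef sum_divide_distrib)
qed

lemma Ef_deriv: "(Ef k has_real_derivative Ef (Suc k) s) (at s)"
proof (cases "s > 0")
  case True
  have i: "(inverse has_real_derivative - (inverse s ^ 2)) (at s)"
    using True DERIV_inverse[of s UNIV] by (simp add: eval_nat_numeral)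
  have p: "((\<lambda>s. poly (Qp k) (inverse s)) has_real_derivative poly (pderiv (Qp k)) (inverse s) * (- (inverse s ^ 2))) (at s)"
    by (rule DERIV_chain2[OF poly_DERIV i])
  have m: "((\<lambda>s. - inverse s) has_real_derivative (inverse s ^ 2)) (at s)"
    using DERIV_minus[OF i] by simp
  have ex: "((\<lambda>s. exp (- inverse s)) has_real_derivative exp (- inverse s) * (inverse s ^ 2)) (at s)"
    by (rule DERIV_chain2[OF DERIV_exp m])
  have d: "((\<lambda>s. poly (Qp k) (inverse s) * exp (- inverse s)) has_real_derivative
     poly (pderiv (Qp k)) (inverse s) * (- (inverse s ^ 2)) * exp (- inverse s) +
     poly (Qp k) (inverse s) * (exp (- inverse s) * (inverse s ^ 2))) (at s)"
    using DERIV_mult[OF p ex] by (simp add: mult_ac)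
  have e: "poly (pderiv (Qp k)) (inverse s) * (- (inverse s ^ 2)) * exp (- inverse s) +
     poly (Qp k) (inverse s) * (exp (- inverse s) * (inverse s ^ 2)) = Ef (Suc k) s"
    using True by (simp add: Ef_def algebra_simps power2_eq_square)
  have ev: "\<forall>\<^sub>F y in nhds s. (\<lambda>s. poly (Qp k) (inverse s) * exp (- inverse s)) y = Ef k y"
    using eventually_nhds_in_open[of "{0<..}" s] True
    by (auto elim!: eventually_mono simp: Ef_def)
  show ?thesis
    using d DERIV_cong_ev[OF refl ev e] by simp
next
  case False
  show ?thesis
  proof (cases "s < 0")
    case True
    have ev: "\<forall>\<^sub>F y in nhds s. (\<lambda>_. 0) y = Ef k y"
      using eventually_nhds_in_open[of "{..<0}" s] True
      by (auto elim!: eventually_mono simp: Ef_def)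
    have "Ef (Suc k) s = 0" using True by (simp add: Ef_def)
    then show ?thesis using ev DERIV_cong_ev[OF refl ev, of 0] by auto
  next
    case False
    with \<open>\<not> s > 0\<close> have s0: "s = 0" by auto
    have r: "((\<lambda>h. (Ef k h - Ef k 0) / h) \<longlongrightarrow> 0) (at_right 0)"
    proof -
      have "((\<lambda>x. poly (pCons 0 (Qp k)) x / exp x) \<longlongrightarrow> 0) at_top"
        by (rule poly_div_exp_0)
      then have "((\<lambda>x. (Ef k (inverse x) - Ef k 0) / inverse x) \<longlongrightarrow> 0) at_top"
      proof (rule Lim_transform_eventually)
        show "\<forall>\<^sub>F x in at_top. poly (pCons 0 (Qp k)) x / exp x = (Ef k (inverse x) - Ef k 0) / inverse x"
          using eventually_gt_at_top[of 0]
          by eventually_elim (simp add: Ef_def exp_minus field_simps)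
      qed
      then show ?thesis
        by (simp add: at_right_to_top filterlim_filtermap o_def)
    qed
    have l: "((\<lambda>h. (Ef k h - Ef k 0) / h) \<longlongrightarrow> 0) (at_left 0)"
    proof (rule Lim_transform_eventually[OF tendsto_const])
      show "\<forall>\<^sub>F x in at_left 0. 0 = (Ef k x - Ef k 0) / x"
        by (simp add: eventually_at_left_field Ef_def) (metis lt_ex)
    qed
    have "((\<lambda>h. (Ef k h - Ef k 0) / h) \<longlongrightarrow> 0) (at 0)"
      using r l by (simp add: filterlim_split_at)
    then show ?thesis
      using s0 by (simp add: has_field_derivative_iff Ef_def)
  qed
qed

lemma Ef0: "Ef 0 s = (if s > 0 then exp (- inverse s) else 0)"
  by (simp add: Ef_def)

lemma Ef0_nonneg: "Ef 0 s \<ge> 0" by (simp add: Ef0)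
lemma Ef0_le1: "Ef 0 s \<le> 1" by (simp add: Ef0)
lemma Ef0_pos_iff: "Ef 0 s > 0 \<longleftrightarrow> s > 0" by (simp add: Ef0)
lemma Ef0_mono: "0 < s \<Longrightarrow> s \<le> t \<Longrightarrow> Ef 0 s \<le> Ef 0 t"
  by (simp add: Ef0 le_imp_inverse_le)

inductive_set SF :: "('b::real_inner \<Rightarrow> real) set" where
  const: "(\<lambda>x. c) \<in> SF"
| lin: "bounded_linear l \<Longrightarrow> l \<in> SF"
| sq: "(\<lambda>x. x \<bullet> x) \<in> SF"
| add: "f \<in> SF \<Longrightarrow> g \<in> SF \<Longrightarrow> (\<lambda>x. f x + g x) \<in> SF"
| mult: "f \<in> SF \<Longrightarrow> g \<in> SF \<Longrightarrow> (\<lambda>x. f x * g x) \<in> SF"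
| comp: "f \<in> SF \<Longrightarrow> (\<lambda>x. Ef k (f x)) \<in> SF"

lemma SF_deriv:
  assumes "f \<in> SF"
  shows "\<exists>D. (\<forall>x. (f has_derivative D x) (at x)) \<and> (\<forall>v. (\<lambda>x. D x v) \<in> SF)"
  using assms
proof induction
  case (const c)
  show ?case
    by (rule exI[of _ "\<lambda>x v. 0"]) (auto intro: SF.const)
next
  case (lin l)
  show ?case
    by (rule exI[of _ "\<lambda>x. l"]) (auto intro: SF.const bounded_linear_imp_has_derivative lin)
next
  case sq
  show ?case
    apply (rule exI[of _ "\<lambda>x v. x \<bullet> v + v \<bullet> x"])
    apply (auto intro!: derivative_eq_intros SF.lin SF.add bounded_linear_add bounded_linear_inner_left bounded_linear_inner_right)
    done
next
  case (add f g)
  then obtain Df Dg where f: "\<forall>x. (f has_derivative Df x) (at x)" "\<forall>v. (\<lambda>x. Df x v) \<in> SF"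
    and g: "\<forall>x. (g has_derivative Dg x) (at x)" "\<forall>v. (\<lambda>x. Dg x v) \<in> SF" by blast
  show ?case
    apply (rule exI[of _ "\<lambda>x v. Df x v + Dg x v"])
    using f g by (auto intro!: has_derivative_add SF.add)
next
  case (mult f g)
  then obtain Df Dg where f: "\<forall>x. (f has_derivative Df x) (at x)" "\<forall>v. (\<lambda>x. Df x v) \<in> SF"
    and g: "\<forall>x. (g has_derivative Dg x) (at x)" "\<forall>v. (\<lambda>x. Dg x v) \<in> SF" by blast
  show ?case
    apply (rule exI[of _ "\<lambda>x v. f x * Dg x v + Df x v * g x"])
    using f g mult.hyps by (auto intro!: has_derivative_mult SF.add SF.mult)
next
  case (comp f k)
  then obtain Df where f: "\<forall>x. (f has_derivative Df x) (at x)" "\<forall>v. (\<lambda>x. Df x v) \<in> SF" by blast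
  have e: "(Ef k has_derivative (\<lambda>h. Ef (Suc k) y * h)) (at y)" for y
    using Ef_deriv[of k y] by (simp add: has_field_derivative_def)
  show ?case
    apply (rule exI[of _ "\<lambda>x v. Ef (Suc k) (f x) * Df x v"])
    using f comp.hyps by (auto intro!: has_derivative_compose[OF _ e] SF.mult SF.comp)
qed

lemma SF_smooth:
  fixes f :: "'a::real_inner \<Rightarrow> real"
  shows "f \<in> SF \<Longrightarrow> smooth_on UNIV f"
proof (rule smooth_on.coinduct[where X="\<lambda>U g. U = UNIV \<and> g \<in> SF"])
  assume "f \<in> SF" then show "UNIV = UNIV \<and> f \<in> SF" by simp
next
  fix U :: "'a set" and g :: "'a \<Rightarrow> real"
  assume a: "U = UNIV \<and> g \<in> SF"
  then obtain D where D: "\<forall>x. (g has_derivative D x) (at x)" "\<forall>v. (\<lambda>x. D x v) \<in> SF"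
    using SF_deriv by blast
  have fd: "frechet_derivative g (at x) = D x" for x
    using D(1) frechet_derivative_at by metis
  show "\<exists>U' f. U = U' \<and> g = f \<and> (\<forall>x\<in>U'. f differentiable at x) \<and> (\<forall>v. (U' = UNIV \<and> (\<lambda>x. frechet_derivative f (at x) v) \<in> SF) \<or> smooth_on U' (\<lambda>x. frechet_derivative f (at x) v))"
    using D a by (auto simp: fd differentiable_def)
qed

lemma SF_fderiv: "f \<in> SF \<Longrightarrow> (\<lambda>x. frechet_derivative f (at x) v) \<in> SF"
proof -
  assume "f \<in> SF"
  then obtain D where D: "\<forall>x. (f has_derivative D x) (at x)" "\<forall>v. (\<lambda>x. D x v) \<in> SF"
    using SF_deriv by blast
  have fd: "frechet_derivative f (at x) = D x" for x
    using D(1) frechet_derivative_at by metis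
  show ?thesis using D by (simp add: fd)
qed

lemma SF_cont: "f \<in> SF \<Longrightarrow> continuous_on UNIV f"
proof -
  assume "f \<in> SF"
  then obtain D where D: "\<forall>x. (f has_derivative D x) (at x)"
    using SF_deriv by blast
  then show ?thesis
    by (meson continuous_at_imp_continuous_on differentiable_def differentiable_imp_continuous_within)
qed

lemma sbm_mult:
  fixes f g :: "'b::euclidean_space \<Rightarrow> real"
  assumes "set_borel_measurable lborel S f" "set_borel_measurable lborel S g"
  shows "set_borel_measurable lborel S (\<lambda>x. f x * g x)"
proof -
  have "(\<lambda>x. indicator S x *\<^sub>R (f x * g x)) = (\<lambda>x. (indicator S x *\<^sub>R f x) * (indicator S x *\<^sub>R g x))"
    by (auto simp: indicator_def fun_eq_iff)
  then show ?thesis using assms unfolding set_borel_measurable_def by simp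
qed

lemma sbm_inner:
  fixes f g :: "'b::euclidean_space \<Rightarrow> 'c::euclidean_space"
  assumes "set_borel_measurable lborel S f" "set_borel_measurable lborel S g"
  shows "set_borel_measurable lborel S (\<lambda>x. f x \<bullet> g x)"
proof -
  have e: "(\<lambda>x. indicator S x *\<^sub>R (f x \<bullet> g x)) = (\<lambda>x. (indicator S x *\<^sub>R f x) \<bullet> (indicator S x *\<^sub>R g x))"
    by (auto simp: indicator_def fun_eq_iff)
  show ?thesis using assms unfolding set_borel_measurable_def
    by (subst e) (rule borel_measurable_inner)
qed

lemma sbm_powr:
  fixes f :: "'b::euclidean_space \<Rightarrow> real"
  assumes "set_borel_measurable lborel S f"
  shows "set_borel_measurable lborel S (\<lambda>x. f x powr p)"
proof -
  have e: "(\<lambda>x. indicator S x *\<^sub>R (f x powr p)) = (\<lambda>x. (indicator S x *\<^sub>R f x) powr p)"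
    by (auto simp: indicator_def fun_eq_iff)
  show ?thesis using assms unfolding set_borel_measurable_def
    by (subst e) (rule powr_real_measurable, auto)
qed

lemma sbm_const:
  assumes "S \<in> sets lborel"
  shows "set_borel_measurable lborel S (\<lambda>x::'b::euclidean_space. c::real)"
  using assms unfolding set_borel_measurable_def by simp

lemma sbm_cont:
  fixes f :: "'b::euclidean_space \<Rightarrow> 'c::euclidean_space"
  assumes "continuous_on UNIV f" "S \<in> sets lborel"
  shows "set_borel_measurable lborel S f"
proof -
  have "f \<in> borel_measurable lborel"
    using borel_measurable_continuous_onI[OF assms(1)] by simp
  then show ?thesis using assms unfolding set_borel_measurable_def by simp
qed

lemma si_cont:
  fixes f :: "'b::euclidean_space \<Rightarrow> 'c::euclidean_space"
  assumes "continuous_on UNIV f" "S \<in> sets lborel" "bounded S"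
  shows "set_integrable lborel S f"
proof -
  have "set_integrable lborel (closure S) f"
    unfolding set_integrable_def
    using assms by (intro borel_integrable_compact) (auto intro: continuous_on_subset compact_closure)
  then show ?thesis
    by (rule set_integrable_subset) (use assms closure_subset in auto)
qed

lemma L2_cont:
  fixes f :: "'b::euclidean_space \<Rightarrow> real"
  assumes "continuous_on UNIV f" "S \<in> sets lborel" "bounded S"
  shows "L2_on S f"
  unfolding L2_on_def
  using assms by (auto intro!: sbm_cont si_cont continuous_intros)

lemma L2v_cont:
  fixes f :: "'b::euclidean_space \<Rightarrow> 'c::euclidean_space"
  assumes "continuous_on UNIV f" "S \<in> sets lborel" "bounded S"
  shows "L2v_on S f"
  unfolding L2v_on_def
  using assms by (auto intro!: sbm_cont si_cont continuous_intros)

lemma si_bdd: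
  fixes f :: "'b::euclidean_space \<Rightarrow> real"
  assumes "set_borel_measurable lborel S f" "S \<in> sets lborel" "emeasure lborel S < \<infinity>"
    and "AE x in lborel. x \<in> S \<longrightarrow> \<bar>f x\<bar> \<le> M"
  shows "set_integrable lborel S f"
proof (rule set_integrable_bound[OF _ assms(1)])
  show "set_integrable lborel S (\<lambda>x. M)"
    unfolding set_integrable_def using assms(2,3)
    by (intro integrable_scaleR_left integrable_real_indicator)
  show "AE x\<in>S in lborel. norm (f x) \<le> norm M"
    using assms(4) by eventually_elim auto
qed

lemma si_L2_mult:
  fixes f g :: "'b::euclidean_space \<Rightarrow> real"
  assumes "L2_on S f" "L2_on S g"
  shows "set_integrable lborel S (\<lambda>x. f x * g x)"
proof (rule set_integrable_bound)
  show "set_integrable lborel S (\<lambda>x. (f x)\<^sup>2 + (g x)\<^sup>2)"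
    using assms unfolding L2_on_def by (intro set_integral_add) auto
  show "set_borel_measurable lborel S (\<lambda>x. f x * g x)"
    using assms unfolding L2_on_def by (intro sbm_mult) auto
  have "\<bar>a * b\<bar> \<le> a\<^sup>2 + b\<^sup>2" for a b :: real
  proof -
    have "2 * (\<bar>a\<bar> * \<bar>b\<bar>) \<le> a\<^sup>2 + b\<^sup>2" using sum_squares_bound[of "\<bar>a\<bar>" "\<bar>b\<bar>"] by (simp add: mult.assoc)
    moreover have "0 \<le> \<bar>a\<bar> * \<bar>b\<bar>" by simp
    ultimately show ?thesis unfolding abs_mult by linarith
  qed
  then show "AE x\<in>S in lborel. norm (f x * g x) \<le> norm ((f x)\<^sup>2 + (g x)\<^sup>2)"
    by (intro AE_I2) auto
qed

lemma si_L2v_inner: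
  fixes f g :: "'b::euclidean_space \<Rightarrow> 'c::euclidean_space"
  assumes "L2v_on S f" "L2v_on S g"
  shows "set_integrable lborel S (\<lambda>x. f x \<bullet> g x)"
proof (rule set_integrable_bound)
  show "set_integrable lborel S (\<lambda>x. (norm (f x))\<^sup>2 + (norm (g x))\<^sup>2)"
    using assms unfolding L2v_on_def by (intro set_integral_add) auto
  show "set_borel_measurable lborel S (\<lambda>x. f x \<bullet> g x)"
    using assms unfolding L2v_on_def by (intro sbm_inner) auto
  have "\<bar>a \<bullet> b\<bar> \<le> (norm a)\<^sup>2 + (norm b)\<^sup>2" for a b :: 'c
  proof -
    have "\<bar>a \<bullet> b\<bar> \<le> norm a * norm b" by (rule Cauchy_Schwarz_ineq2)
    also have "\<dots> \<le> (norm a)\<^sup>2 + (norm b)\<^sup>2"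
    proof -
      have "2 * (norm a * norm b) \<le> (norm a)\<^sup>2 + (norm b)\<^sup>2" using sum_squares_bound[of "norm a" "norm b"] by (simp add: mult.assoc)
      moreover have "0 \<le> norm a * norm b" by simp
      ultimately show ?thesis by linarith
    qed
    finally show ?thesis .
  qed
  then show "AE x\<in>S in lborel. norm (f x \<bullet> g x) \<le> norm ((norm (f x))\<^sup>2 + (norm (g x))\<^sup>2)"
    by (intro AE_I2) auto
qed

lemma sbm_subset:
  fixes f :: "'b::euclidean_space \<Rightarrow> 'c::euclidean_space"
  assumes "set_borel_measurable lborel S f" "B \<in> sets lborel" "B \<subseteq> S"
  shows "set_borel_measurable lborel B f"
proof -
  have e: "(\<lambda>x. indicator B x *\<^sub>R f x) = (\<lambda>x. indicator B x *\<^sub>R (indicator S x *\<^sub>R f x))"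
    using assms(3) by (auto simp: indicator_def fun_eq_iff)
  have h: "(\<lambda>x. indicator S x *\<^sub>R f x) \<in> borel_measurable lborel"
    using assms(1) unfolding set_borel_measurable_def by simp
  show ?thesis unfolding set_borel_measurable_def
    using borel_measurable_scaleR[OF borel_measurable_indicator[OF assms(2)] h] by (subst e)
qed

lemma sbm_diff:
  fixes f g :: "'b::euclidean_space \<Rightarrow> real"
  assumes "set_borel_measurable lborel S f" "set_borel_measurable lborel S g"
  shows "set_borel_measurable lborel S (\<lambda>x. f x - g x)"
proof -
  have e: "(\<lambda>x. indicator S x *\<^sub>R (f x - g x)) = (\<lambda>x. (indicator S x *\<^sub>R f x) - (indicator S x *\<^sub>R g x))"
    by (auto simp: indicator_def fun_eq_iff)
  show ?thesis using assms unfolding set_borel_measurable_def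
    by (subst e) (rule borel_measurable_diff)
qed

lemma sbm_Collect_le:
  fixes f :: "'b::euclidean_space \<Rightarrow> real"
  assumes "set_borel_measurable lborel A f" "A \<in> sets lborel"
  shows "{z\<in>A. c \<le> f z} \<in> sets lborel"
proof -
  have h: "(\<lambda>x. indicator A x *\<^sub>R f x) \<in> borel_measurable lborel"
    using assms unfolding set_borel_measurable_def by simp
  have "{z\<in>A. c \<le> f z} = A \<inter> {z \<in> space lborel. c \<le> indicator A z *\<^sub>R f z}"
    by (auto simp: indicator_def)
  also have "\<dots> \<in> sets lborel"
    using h assms(2) by measurable
  finally show ?thesis .
qed

lemma sbm_Collect_less:
  fixes f :: "'b::euclidean_space \<Rightarrow> real"
  assumes "set_borel_measurable lborel A f" "A \<in> sets lborel"
  shows "{z\<in>A. c < f z} \<in> sets lborel"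
proof -
  have h: "(\<lambda>x. indicator A x *\<^sub>R f x) \<in> borel_measurable lborel"
    using assms unfolding set_borel_measurable_def by simp
  have "{z\<in>A. c < f z} = A \<inter> {z \<in> space lborel. c < indicator A z *\<^sub>R f z}"
    by (auto simp: indicator_def)
  also have "\<dots> \<in> sets lborel"
    using h assms(2) by measurable
  finally show ?thesis .
qed

context
  fixes S B :: "'b::euclidean_space set"
    and U D :: "nat \<Rightarrow> 'b \<Rightarrow> real" and G :: "nat \<Rightarrow> 'b \<Rightarrow> 'c::euclidean_space"
    and u \<psi> \<beta> :: "'b \<Rightarrow> real" and \<Psi> :: "'b \<Rightarrow> 'c" and p :: "nat \<Rightarrow> real"
    and a \<delta> Mb bl :: real
  assumes S: "S \<in> sets lborel" "emeasure lborel S < \<infinity>"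
    and B: "B \<in> sets lborel" "B \<subseteq> S"
    and \<psi>: "L2_on S \<psi>" "\<And>z. 0 \<le> \<psi> z" "\<And>z. \<psi> z \<le> 1" and \<Psi>: "L2v_on S \<Psi>"
    and \<delta>: "\<delta> > 0" "\<And>z. z \<in> B \<Longrightarrow> \<delta> \<le> \<psi> z"
    and \<beta>: "set_borel_measurable lborel S \<beta>" "AE z in lborel. z \<in> S \<longrightarrow> 0 \<le> \<beta> z \<and> \<beta> z \<le> Mb"
        "bl > 0" "AE z in lborel. z \<in> B \<longrightarrow> bl \<le> \<beta> z"
    and U: "\<And>k. L2_on S (U k)" "\<And>k. \<exists>M. AE z in lborel. z \<in> S \<longrightarrow> \<bar>U k z\<bar> \<le> M"
           "\<And>k. AE z in lborel. z \<in> S \<longrightarrow> 0 \<le> U k z"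
    and D: "\<And>k. L2_on S (D k)" and G: "\<And>k. L2v_on S (G k)"
    and eq: "\<And>k. (LINT z:S|lborel. D k z * \<psi> z + G k z \<bullet> \<Psi> z)
                 = (LINT z:S|lborel. (a * U k z - \<beta> z * U k z powr p k) * \<psi> z)"
    and cU: "convergent (\<lambda>k. LINT z:S|lborel. U k z * \<psi> z)"
    and cD: "convergent (\<lambda>k. LINT z:S|lborel. D k z * \<psi> z)"
    and cG: "convergent (\<lambda>k. LINT z:S|lborel. G k z \<bullet> \<Psi> z)"
    and u: "L2_on S u" "(\<lambda>k. LINT z:S|lborel. (U k z - u z)\<^sup>2) \<longlonglongrightarrow> 0"
    and p: "filterlim p at_top sequentially" "\<And>k. 0 < p k"
begin

lemma Um: "set_borel_measurable lborel S (U k)"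
  using U(1) unfolding L2_on_def by simp

lemma UpB_int: "set_integrable lborel B (\<lambda>z. U k z powr p k)"
proof -
  obtain M where M: "AE z in lborel. z \<in> S \<longrightarrow> \<bar>U k z\<bar> \<le> M" using U(2) by blast
  have eB: "emeasure lborel B < \<infinity>"
    using emeasure_mono[OF B(2) S(1)] S(2) by (meson le_less_trans)
  show ?thesis
  proof (rule si_bdd[OF _ B(1) eB])
    show "set_borel_measurable lborel B (\<lambda>z. U k z powr p k)"
      by (intro sbm_powr sbm_subset[OF Um B(1) B(2)])
    show "AE x in lborel. x \<in> B \<longrightarrow> \<bar>U k x powr p k\<bar> \<le> M powr p k"
      using M U(3)[of k]
    proof eventually_elim
      case (elim x)
      show ?case
      proof
        assume "x \<in> B" then have "x \<in> S" using B by auto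
        then show "\<bar>U k x powr p k\<bar> \<le> M powr p k"
          using elim p(2)[of k] by (auto intro!: powr_mono2)
      qed
    qed
  qed
qed

lemma bUp_int: "set_integrable lborel S (\<lambda>z. \<beta> z * U k z powr p k * \<psi> z)"
proof -
  obtain M where M: "AE z in lborel. z \<in> S \<longrightarrow> \<bar>U k z\<bar> \<le> M" using U(2) by blast
  show ?thesis
  proof (rule si_bdd[OF _ S(1) S(2)])
    show "set_borel_measurable lborel S (\<lambda>z. \<beta> z * U k z powr p k * \<psi> z)"
      using \<psi>(1) unfolding L2_on_def by (intro sbm_mult sbm_powr \<beta>(1) Um) auto
    show "AE x in lborel. x \<in> S \<longrightarrow> \<bar>\<beta> x * U k x powr p k * \<psi> x\<bar> \<le> Mb * M powr p k * 1"
      using M U(3)[of k] \<beta>(2)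
    proof eventually_elim
      case (elim x)
      show ?case
      proof
        assume x: "x \<in> S"
        have a1: "U k x powr p k \<le> M powr p k"
          using elim x p(2)[of k] by (auto intro!: powr_mono2)
        have "\<bar>\<beta> x * U k x powr p k * \<psi> x\<bar> = \<beta> x * U k x powr p k * \<psi> x"
          using elim x \<psi>(2)[of x] by simp
        also have "\<dots> \<le> Mb * M powr p k * 1"
          using elim x \<psi>(2)[of x] \<psi>(3)[of x] a1
          by (intro mult_mono) auto
        finally show "\<bar>\<beta> x * U k x powr p k * \<psi> x\<bar> \<le> Mb * M powr p k * 1" .
      qed
    qed
  qed
qed

lemma J_eq: "(LINT z:S|lborel. \<beta> z * U k z powr p k * \<psi> z)
   = a * (LINT z:S|lborel. U k z * \<psi> z) - (LINT z:S|lborel. D k z * \<psi> z) - (LINT z:S|lborel. G k z \<bullet> \<Psi> z)"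
proof -
  have i1: "set_integrable lborel S (\<lambda>z. D k z * \<psi> z)" by (rule si_L2_mult[OF D \<psi>(1)])
  have i2: "set_integrable lborel S (\<lambda>z. G k z \<bullet> \<Psi> z)" by (rule si_L2v_inner[OF G \<Psi>])
  have i3: "set_integrable lborel S (\<lambda>z. U k z * \<psi> z)" by (rule si_L2_mult[OF U(1) \<psi>(1)])
  have i3': "set_integrable lborel S (\<lambda>z. a * (U k z * \<psi> z))"
    using i3 by (rule set_integrable_mult_right)
  have l: "(LINT z:S|lborel. D k z * \<psi> z + G k z \<bullet> \<Psi> z) = (LINT z:S|lborel. D k z * \<psi> z) + (LINT z:S|lborel. G k z \<bullet> \<Psi> z)"
    by (rule set_integral_add(2)[OF i1 i2])
  have f: "(\<lambda>z. (a * U k z - \<beta> z * U k z powr p k) * \<psi> z) = (\<lambda>z. a * (U k z * \<psi> z) - \<beta> z * U k z powr p k * \<psi> z)"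
    by (simp add: fun_eq_iff algebra_simps)
  have r: "(LINT z:S|lborel. (a * U k z - \<beta> z * U k z powr p k) * \<psi> z)
      = a * (LINT z:S|lborel. U k z * \<psi> z) - (LINT z:S|lborel. \<beta> z * U k z powr p k * \<psi> z)"
    unfolding f by (simp add: set_integral_diff(2)[OF i3' bUp_int] set_integral_mult_right)
  show ?thesis using eq[of k] l r by linarith
qed

lemma J_bound: "\<exists>K. \<forall>k. (LINT z:S|lborel. \<beta> z * U k z powr p k * \<psi> z) \<le> K"
proof -
  have "convergent (\<lambda>k. a * (LINT z:S|lborel. U k z * \<psi> z) - (LINT z:S|lborel. D k z * \<psi> z) - (LINT z:S|lborel. G k z \<bullet> \<Psi> z))"
    using cU cD cG by (intro convergent_diff convergent_mult convergent_const)
  then have "Bseq (\<lambda>k. (LINT z:S|lborel. \<beta> z * U k z powr p k * \<psi> z))"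
    unfolding J_eq by (rule convergent_imp_Bseq)
  then obtain K where "\<forall>n. norm (LINT z:S|lborel. \<beta> z * U n z powr p n * \<psi> z) \<le> K"
    by (rule BseqE)
  then show ?thesis by (intro exI[of _ K]) (auto simp: abs_le_iff)
qed

lemma UpB_bound: "\<exists>C. \<forall>k. (LINT z:B|lborel. U k z powr p k) \<le> C"
proof -
  obtain K where K: "\<And>k. (LINT z:S|lborel. \<beta> z * U k z powr p k * \<psi> z) \<le> K"
    using J_bound by blast
  have "bl * \<delta> * (LINT z:B|lborel. U k z powr p k) \<le> K" for k
  proof -
    have "bl * \<delta> * (LINT z:B|lborel. U k z powr p k) = (LINT z:B|lborel. bl * \<delta> * U k z powr p k)"
      by (rule set_integral_mult_right[symmetric])
    also have "\<dots> = integral\<^sup>L lborel (\<lambda>z. indicator B z *\<^sub>R (bl * \<delta> * U k z powr p k))"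
      by (simp only: set_lebesgue_integral_def)
    also have "\<dots> \<le> integral\<^sup>L lborel (\<lambda>z. indicator S z *\<^sub>R (\<beta> z * U k z powr p k * \<psi> z))"
    proof (rule integral_mono_AE)
      show "integrable lborel (\<lambda>z. indicator B z *\<^sub>R (bl * \<delta> * U k z powr p k))"
        using set_integrable_mult_right[OF UpB_int, of "bl * \<delta>"] by (simp add: set_integrable_def mult.assoc)
      show "integrable lborel (\<lambda>z. indicator S z *\<^sub>R (\<beta> z * U k z powr p k * \<psi> z))"
        using bUp_int[of k] by (simp add: set_integrable_def)
      show "AE z in lborel. indicator B z *\<^sub>R (bl * \<delta> * U k z powr p k) \<le> indicator S z *\<^sub>R (\<beta> z * U k z powr p k * \<psi> z)"
        using \<beta>(2) \<beta>(4)
      proof eventually_elim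
        case (elim z)
        show ?case
        proof (cases "z \<in> B")
          case True
          then have zS: "z \<in> S" using B by auto
          have "bl * \<delta> * U k z powr p k \<le> \<beta> z * \<psi> z * U k z powr p k"
            using elim True zS \<delta> \<beta>(3) \<psi>(2)[of z]
            by (intro mult_right_mono mult_mono) auto
          then show ?thesis using True zS by (simp add: mult_ac)
        next
          case False
          then show ?thesis
            using elim \<psi>(2)[of z] by (auto simp: indicator_def)
        qed
      qed
    qed
    also have "\<dots> = (LINT z:S|lborel. \<beta> z * U k z powr p k * \<psi> z)"
      by (simp add: set_lebesgue_integral_def)
    also have "\<dots> \<le> K" by (rule K)
    finally show ?thesis .
  qed
  then have "(LINT z:B|lborel. U k z powr p k) \<le> K / (bl * \<delta>)" for k
    using \<beta>(3) \<delta>(1) by (simp add: field_simps mult_ac)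
  then show ?thesis by blast
qed


lemma um: "set_borel_measurable lborel S u"
  using u(1) unfolding L2_on_def by simp

lemma diff_sbm: "set_borel_measurable lborel S (\<lambda>z. (U k z - u z)\<^sup>2)"
proof -
  have "set_borel_measurable lborel S (\<lambda>z. (U k z - u z) * (U k z - u z))"
    by (intro sbm_mult sbm_diff Um um)
  then show ?thesis by (simp add: power2_eq_square)
qed

lemma diff_int: "set_integrable lborel S (\<lambda>z. (U k z - u z)\<^sup>2)"
proof (rule set_integrable_bound[OF _ diff_sbm])
  show "set_integrable lborel S (\<lambda>z. 2 * (U k z)\<^sup>2 + 2 * (u z)\<^sup>2)"
    using U(1)[of k] u(1) unfolding L2_on_def
    by (intro set_integral_add set_integrable_mult_right) auto
  have "(a - b)\<^sup>2 \<le> 2 * a\<^sup>2 + 2 * b\<^sup>2" for a b :: real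
    using power2_diff[of a b] power2_sum[of a b] zero_le_power2[of "a+b"] by linarith
  then show "AE x\<in>S in lborel. norm ((U k x - u x)\<^sup>2) \<le> norm (2 * (U k x)\<^sup>2 + 2 * (u x)\<^sup>2)"
    by (intro AE_I2) auto
qed

lemma eps_bound:
  assumes \<epsilon>: "\<epsilon> > 0"
  shows "AE z in lborel. z \<in> B \<longrightarrow> u z \<le> 1 + 2 * \<epsilon>"
proof -
  obtain C0 where C0: "\<And>k. (LINT z:B|lborel. U k z powr p k) \<le> C0" using UpB_bound by blast
  define C where "C = max C0 0"
  have C: "\<And>k. (LINT z:B|lborel. U k z powr p k) \<le> C" "C \<ge> 0"
    unfolding C_def using C0 by (auto simp: le_max_iff_disj)
  define X where "X k = {z\<in>B. (1+\<epsilon>) powr p k \<le> U k z powr p k}" for k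
  define Y where "Y k = {z\<in>S. \<epsilon>\<^sup>2 \<le> (U k z - u z)\<^sup>2}" for k
  define F where "F = {z\<in>B. 1 + 2 * \<epsilon> < u z}"
  have Xm: "X k \<in> sets lborel" for k
    unfolding X_def by (intro sbm_Collect_le sbm_powr sbm_subset[OF Um B(1) B(2)] B(1))
  have Ym: "Y k \<in> sets lborel" for k
    unfolding Y_def by (intro sbm_Collect_le diff_sbm S(1))
  have Fm: "F \<in> sets lborel"
    unfolding F_def by (intro sbm_Collect_less sbm_subset[OF um B(1) B(2)] B(1))
  have sub: "F \<subseteq> X k \<union> Y k" for k
  proof
    fix z assume "z \<in> F"
    then have zB: "z \<in> B" and uz: "1 + 2 * \<epsilon> < u z" unfolding F_def by auto
    then have zS: "z \<in> S" using B by auto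
    show "z \<in> X k \<union> Y k"
    proof (cases "1 + \<epsilon> \<le> U k z")
      case True
      then have "(1+\<epsilon>) powr p k \<le> U k z powr p k"
        using \<epsilon> p(2)[of k] by (intro powr_mono2) auto
      then show ?thesis using zB unfolding X_def by auto
    next
      case False
      then have "\<epsilon> \<le> u z - U k z" using uz by auto
      then have "\<epsilon>\<^sup>2 \<le> (u z - U k z)\<^sup>2" using \<epsilon> by (intro power_mono) auto
      also have "\<dots> = (U k z - u z)\<^sup>2" by (simp add: power2_commute)
      finally show ?thesis using zS unfolding Y_def by auto
    qed
  qed
  have cpos: "0 < (1+\<epsilon>) powr p k" for k using \<epsilon> by simp
  have eX: "emeasure lborel (X k) \<le> ennreal (C / (1+\<epsilon>) powr p k)" for k
  proof -
    have "emeasure lborel (X k) \<le> ennreal ((1 / (1+\<epsilon>) powr p k) * (LINT z:B|lborel. U k z powr p k))"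
      unfolding X_def
      by (rule integral_Markov_inequality'[OF UpB_int B(1) _ cpos]) (auto intro!: AE_I2)
    also have "\<dots> \<le> ennreal (C / (1+\<epsilon>) powr p k)"
      using C(1)[of k] cpos[of k] by (intro ennreal_leI) (simp add: divide_right_mono)
    finally show ?thesis .
  qed
  have e2: "0 < \<epsilon>\<^sup>2" using \<epsilon> by simp
  have eY: "emeasure lborel (Y k) \<le> ennreal ((1 / \<epsilon>\<^sup>2) * (LINT z:S|lborel. (U k z - u z)\<^sup>2))" for k
    unfolding Y_def
    by (rule integral_Markov_inequality'[OF diff_int S(1) _ e2]) (auto intro!: AE_I2)
  define s where "s k = C / (1+\<epsilon>) powr p k + (1 / \<epsilon>\<^sup>2) * (LINT z:S|lborel. (U k z - u z)\<^sup>2)" for k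
  have Fle: "emeasure lborel F \<le> ennreal (s k)" for k
  proof -
    have "emeasure lborel F \<le> emeasure lborel (X k \<union> Y k)"
      by (rule emeasure_mono[OF sub]) (intro sets.Un Xm Ym)
    also have "\<dots> \<le> emeasure lborel (X k) + emeasure lborel (Y k)"
      by (rule emeasure_subadditive[OF Xm Ym])
    also have "\<dots> \<le> ennreal (C / (1+\<epsilon>) powr p k) + ennreal ((1 / \<epsilon>\<^sup>2) * (LINT z:S|lborel. (U k z - u z)\<^sup>2))"
      by (intro add_mono eX eY)
    also have "\<dots> = ennreal (s k)"
    proof -
      have "0 \<le> C / (1+\<epsilon>) powr p k" using C(2) cpos[of k] by simp
      moreover have "0 \<le> (LINT z:S|lborel. (U k z - u z)\<^sup>2)"
        unfolding set_lebesgue_integral_def by (intro Bochner_Integration.integral_nonneg) (auto simp: indicator_def)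
      ultimately show ?thesis unfolding s_def by (simp add: ennreal_plus)
    qed
    finally show ?thesis .
  qed
  have lim1: "filterlim (\<lambda>k. (1+\<epsilon>) powr p k) at_top sequentially"
  proof -
    have "filterlim (\<lambda>k. exp (p k * ln (1+\<epsilon>))) at_top sequentially"
      using \<epsilon> by (intro filterlim_compose[OF exp_at_top] filterlim_at_top_mult_tendsto_pos[OF tendsto_const _ p(1)]) auto
    moreover have "(1+\<epsilon>) powr p k = exp (p k * ln (1+\<epsilon>))" for k
      using \<epsilon> by (simp add: powr_def)
    ultimately show ?thesis by simp
  qed
  have "s \<longlonglongrightarrow> C * 0 + (1 / \<epsilon>\<^sup>2) * 0"
    unfolding s_def divide_inverse
    by (intro tendsto_add tendsto_mult tendsto_const tendsto_inverse_0_at_top lim1 u(2)[unfolded divide_inverse])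
  then have "(\<lambda>k. ennreal (s k)) \<longlonglongrightarrow> ennreal 0"
    by (intro tendsto_ennrealI) simp
  then have "emeasure lborel F \<le> ennreal 0"
    by (rule LIMSEQ_le_const) (use Fle in auto)
  then have "F \<in> null_sets lborel" using Fm by (simp add: null_sets_def)
  then show ?thesis
    by (rule AE_I') (auto simp: F_def)
qed

lemma key_conclusion: "AE z in lborel. z \<in> B \<longrightarrow> u z \<le> 1"
proof -
  have "AE z in lborel. \<forall>n. z \<in> B \<longrightarrow> u z \<le> 1 + 2 * inverse (real (Suc n))"
    unfolding AE_all_countable by (intro allI eps_bound) simp
  then show ?thesis
  proof eventually_elim
    case (elim z)
    show ?case
    proof
      assume zB: "z \<in> B"
      show "u z \<le> 1"
      proof (rule ccontr)
        assume "\<not> u z \<le> 1"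
        then have "0 < (u z - 1) / 2" by simp
        then obtain n where n: "inverse (real (Suc n)) < (u z - 1) / 2"
          using reals_Archimedean by blast
        have "u z \<le> 1 + 2 * inverse (real (Suc n))" using elim zB by blast
        moreover have "\<And>t::real. t < (u z - 1) / 2 \<Longrightarrow> u z \<le> 1 + 2 * t \<Longrightarrow> False" by (auto simp: field_simps)
        ultimately show False using n by blast
      qed
    qed
  qed
qed

end

lemma line_zero_aux:
  fixes \<rho> :: "'a::euclidean_space \<Rightarrow> real"
  assumes V: "convex V"
    and der: "\<And>x. x \<in> V \<Longrightarrow> (\<rho> has_derivative D x) (at x)"
    and nz: "\<And>x. x \<in> V \<Longrightarrow> D x i \<noteq> 0"
    and a: "a \<in> V" "a + c *\<^sub>R i \<in> V" "\<rho> a = 0" "\<rho> (a + c *\<^sub>R i) = 0" and c: "c > 0"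
  shows False
proof -
  define h where "h t = \<rho> (a + t *\<^sub>R i)" for t
  have inV: "a + t *\<^sub>R i \<in> V" if "0 \<le> t" "t \<le> c" for t
  proof -
    have "(1 - t/c) *\<^sub>R a + (t/c) *\<^sub>R (a + c *\<^sub>R i) \<in> V"
      using that c by (intro convexD_alt[OF V a(1) a(2)]) auto
    also have "(1 - t/c) *\<^sub>R a + (t/c) *\<^sub>R (a + c *\<^sub>R i) = a + t *\<^sub>R i"
      using c by (simp add: algebra_simps)
    finally show ?thesis .
  qed
  have hd: "(h has_derivative (\<lambda>v. D (a + t *\<^sub>R i) (v *\<^sub>R i))) (at t)" if "0 \<le> t" "t \<le> c" for t
  proof -
    have l: "((\<lambda>t. a + t *\<^sub>R i) has_derivative (\<lambda>v. v *\<^sub>R i)) (at t)"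
      by (auto intro!: derivative_eq_intros)
    show ?thesis unfolding h_def
      using has_derivative_compose[OF l der[OF inV[OF that]]] by simp
  qed
  have cont: "continuous_on {0..c} h"
    using hd by (intro continuous_at_imp_continuous_on ballI has_derivative_continuous) auto
  obtain z where z: "0 < z" "z < c" "(\<lambda>v. D (a + z *\<^sub>R i) (v *\<^sub>R i)) = (\<lambda>v. 0)"
    using Rolle_deriv[OF c _ cont, of "\<lambda>t v. D (a + t *\<^sub>R i) (v *\<^sub>R i)"] hd a(3,4)
    by (auto simp: h_def)
  then have "D (a + z *\<^sub>R i) (1 *\<^sub>R i) = 0" by metis
  with nz[OF inV] z show False by auto
qed

lemma line_zero:
  fixes \<rho> :: "'a::euclidean_space \<Rightarrow> real"
  assumes V: "convex V"
    and der: "\<And>x. x \<in> V \<Longrightarrow> (\<rho> has_derivative D x) (at x)"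
    and nz: "\<And>x. x \<in> V \<Longrightarrow> D x i \<noteq> 0"
    and a: "a \<in> V" "a' \<in> V" "\<rho> a = 0" "\<rho> a' = 0" "a' = a + c *\<^sub>R i"
  shows "c = 0"
proof (rule ccontr)
  assume "c \<noteq> 0"
  then consider "c > 0" | "c < 0" by linarith
  then show False
  proof cases
    case 1 then show False using line_zero_aux[OF V der nz a(1) _ a(3), of c] a by auto
  next
    case 2
    have "a = a' + (-c) *\<^sub>R i" using a(5) by (simp add: algebra_simps)
    then show False using line_zero_aux[OF V der nz a(2) _ a(4), of "-c"] a 2 by auto
  qed
qed

lemma frontier_local_null:
  fixes \<rho> :: "'a::euclidean_space \<Rightarrow> real" and O0 :: "'a set"
  assumes O0: "open O0" and x0: "x0 \<in> frontier O0" and U: "open U" "x0 \<in> U"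
    and sm: "smooth_on U \<rho>" and gr: "\<forall>x\<in>U. grad \<rho> x \<noteq> 0"
    and eqU: "O0 \<inter> U = {x\<in>U. \<rho> x < 0}"
  shows "\<exists>e>0. frontier O0 \<inter> ball x0 e \<in> null_sets lborel"
proof -
  from sm have diff: "\<forall>x\<in>U. \<rho> differentiable (at x)"
    and smd: "\<And>v. smooth_on U (\<lambda>x. frechet_derivative \<rho> (at x) v)"
    by (auto elim: smooth_on.cases)
  have der: "(\<rho> has_derivative frechet_derivative \<rho> (at x)) (at x)" if "x \<in> U" for x
    using diff that frechet_derivative_works by blast
  have zero: "\<rho> x = 0" if x: "x \<in> frontier O0" "x \<in> U" for x
  proof -
    have fd: "frontier O0 \<inter> O0 = {}" using O0 by (simp add: frontier_disjoint_eq)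
    have xO: "x \<notin> O0" using x(1) fd by auto
    have ge: "\<rho> x \<ge> 0"
    proof (rule ccontr)
      assume "\<not> \<rho> x \<ge> 0"
      then have "x \<in> O0 \<inter> U" unfolding eqU using x(2) by simp
      then show False using xO by simp
    qed
    show ?thesis
    proof (rule ccontr)
      assume "\<rho> x \<noteq> 0"
      with ge have pos: "\<rho> x > 0" by simp
      have "continuous (at x) \<rho>"
        using diff x differentiable_imp_continuous_within by blast
      then obtain d where d: "d > 0" "\<And>y. dist y x < d \<Longrightarrow> dist (\<rho> y) (\<rho> x) < \<rho> x"
        using pos unfolding continuous_at_eps_delta by blast
      obtain eU where eU: "eU > 0" "ball x eU \<subseteq> U"
        using U(1) x(2) open_contains_ball by blast
      have "x \<in> closure O0" using x by (simp add: frontier_def)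
      then obtain y where y: "y \<in> O0" "dist y x < min d eU"
        using d(1) eU(1) unfolding closure_approachable by (meson min_less_iff_conj)
      then have "y \<in> U" using eU by (auto simp: dist_commute)
      then have "\<rho> y < 0" using y eqU by auto
      moreover have "dist (\<rho> y) (\<rho> x) < \<rho> x" using d(2) y by auto
      ultimately show False by (auto simp: dist_real_def)
    qed
  qed
  have "\<exists>i\<in>Basis. frechet_derivative \<rho> (at x0) i \<noteq> 0"
  proof (rule ccontr)
    assume "\<not> (\<exists>i\<in>Basis. frechet_derivative \<rho> (at x0) i \<noteq> 0)"
    then have "grad \<rho> x0 = 0" unfolding grad_def by (auto intro: sum.neutral)
    moreover have "grad \<rho> x0 \<noteq> 0" using gr U by auto
    ultimately show False by simp
  qed
  then obtain i where i: "i \<in> Basis" "frechet_derivative \<rho> (at x0) i \<noteq> 0" by blast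
  define g where "g x = frechet_derivative \<rho> (at x) i" for x
  have "continuous (at x0) g"
  proof -
    have "smooth_on U g" using smd[of i] unfolding g_def by simp
    then have "g differentiable (at x0)" using U by (auto elim: smooth_on.cases)
    then show ?thesis by (rule differentiable_imp_continuous_within)
  qed
  then obtain d where d: "d > 0" "\<And>y. dist y x0 < d \<Longrightarrow> dist (g y) (g x0) < \<bar>g x0\<bar>"
    using i(2) unfolding continuous_at_eps_delta g_def by (metis zero_less_abs_iff)
  obtain eU where eU: "eU > 0" "ball x0 eU \<subseteq> U"
    using U open_contains_ball by blast
  define \<delta> where "\<delta> = min d eU"
  have \<delta>: "\<delta> > 0" "ball x0 \<delta> \<subseteq> U" using d eU by (auto simp: \<delta>_def)
  have gnz: "g y \<noteq> 0" if "y \<in> ball x0 \<delta>" for y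
  proof
    assume "g y = 0"
    moreover have "dist y x0 < d" using that by (auto simp: \<delta>_def dist_commute)
    ultimately show False using d(2)[of y] by (simp add: dist_real_def)
  qed
  define e where "e = \<delta> / 2"
  have e: "e > 0" using \<delta> by (simp add: e_def)
  define Z where "Z = frontier O0 \<inter> ball x0 e"
  have Zm: "Z \<in> sets lborel" unfolding Z_def by (intro sets.Int borel_closed borel_open) auto
  have Zsub: "Z \<subseteq> ball x0 \<delta>" using e_def \<delta> by (auto simp: Z_def)
  have Zzero: "\<rho> z = 0" if "z \<in> Z" for z
  proof -
    have "z \<in> U" using that Zsub \<delta>(2) by blast
    moreover have "z \<in> frontier O0" using that by (simp add: Z_def)
    ultimately show ?thesis using zero by blast
  qed
  define t where "t n = e / real (Suc n)" for n
  have t_pos: "0 < t n" "t n \<le> e" for n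
    using e by (auto simp: t_def field_simps)
  have t_inj: "t m = t n \<Longrightarrow> m = n" for m n
    using e by (auto simp: t_def)
  define A where "A n = {x. x - t n *\<^sub>R i \<in> Z}" for n
  have norm_i: "norm i = 1" using i by simp
  have Asub: "A n \<subseteq> ball x0 \<delta>" for n
  proof
    fix x assume "x \<in> A n"
    then have "dist x0 (x - t n *\<^sub>R i) < e" by (auto simp: A_def Z_def)
    moreover have "dist x0 x \<le> dist x0 (x - t n *\<^sub>R i) + norm (t n *\<^sub>R i)"
    proof -
      have "x0 - x = (x0 - (x - t n *\<^sub>R i)) - t n *\<^sub>R i" by (simp add: algebra_simps)
      then show ?thesis by (simp only: dist_norm norm_triangle_ineq4)
    qed
    moreover have "norm (t n *\<^sub>R i) \<le> e" using t_pos[of n] norm_i by simp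
    ultimately show "x \<in> ball x0 \<delta>" using e_def by simp
  qed
  have Am: "A n \<in> sets lborel" for n
  proof -
    have "(\<lambda>x. x - t n *\<^sub>R i) \<in> borel_measurable borel"
      by (intro borel_measurable_continuous_onI continuous_intros)
    then have "(\<lambda>x. x - t n *\<^sub>R i) -` Z \<inter> space borel \<in> sets borel"
      using Zm by (intro measurable_sets) auto
    then show ?thesis by (simp add: A_def vimage_def)
  qed
  have Ameas: "emeasure lborel (A n) = emeasure lborel Z" for n
  proof -
    have m: "((+) (- (t n *\<^sub>R i))) \<in> measurable lborel borel" by simp
    have "emeasure lborel Z = emeasure (distr lborel borel ((+) (- (t n *\<^sub>R i)))) Z"
      by (simp add: lborel_distr_plus)
    also have "\<dots> = emeasure lborel ((+) (- (t n *\<^sub>R i)) -` Z \<inter> space lborel)"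
      using Zm by (intro emeasure_distr m) auto
    also have "(+) (- (t n *\<^sub>R i)) -` Z \<inter> space lborel = A n"
      by (auto simp: A_def)
    finally show ?thesis by simp
  qed
  have disj: "disjoint_family A"
  proof (unfold disjoint_family_on_def, intro ballI impI equalityI subsetI)
    fix m n x assume mn: "m \<noteq> n" and x: "x \<in> A m \<inter> A n"
    define a where "a = x - t m *\<^sub>R i"
    define a' where "a' = x - t n *\<^sub>R i"
    have aZ: "a \<in> Z" "a' \<in> Z" using x by (auto simp: A_def a_def a'_def)
    have eq: "a' = a + (t m - t n) *\<^sub>R i" by (simp add: a_def a'_def algebra_simps)
    have "t m - t n = 0"
    proof (rule line_zero[of "ball x0 \<delta>" \<rho> "\<lambda>x. frechet_derivative \<rho> (at x)" i a a'])
      show "convex (ball x0 \<delta>)" by simp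
      show "\<And>x. x \<in> ball x0 \<delta> \<Longrightarrow> (\<rho> has_derivative frechet_derivative \<rho> (at x)) (at x)"
        using der \<delta>(2) by blast
      show "\<And>x. x \<in> ball x0 \<delta> \<Longrightarrow> frechet_derivative \<rho> (at x) i \<noteq> 0"
        using gnz unfolding g_def by blast
    qed (use aZ Zsub Zzero eq in auto)
    then show "x \<in> {}" using t_inj mn by auto
  qed auto
  have fin_ball: "ball x0 \<delta> \<in> fmeasurable lborel"
    using emeasure_bounded_finite[OF bounded_ball, of x0 \<delta>] by (simp add: fmeasurable_def)
  have Zfin: "emeasure lborel Z \<noteq> \<infinity>"
  proof -
    have "bounded Z" using Zsub bounded_subset[OF bounded_ball] by blast
    then show ?thesis using emeasure_bounded_finite[of Z] by simp
  qed
  define m where "m = measure lborel Z"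
  have Nm: "real N * m \<le> measure lborel (ball x0 \<delta>)" for N
  proof -
    have "measure lborel (\<Union>n\<in>{..<N}. A n) = (\<Sum>n\<in>{..<N}. measure lborel (A n))"
      using disj Am Ameas Zfin
      by (intro measure_finite_Union) (auto simp: disjoint_family_on_def)
    also have "\<dots> = real N * m"
      using Ameas by (simp add: measure_def m_def)
    finally have "real N * m = measure lborel (\<Union>n\<in>{..<N}. A n)" by simp
    also have "\<dots> \<le> measure lborel (ball x0 \<delta>)"
      using Asub Am fin_ball by (intro measure_mono_fmeasurable) auto
    finally show ?thesis .
  qed
  have "m = 0"
  proof (rule ccontr)
    assume "m \<noteq> 0"
    moreover have "0 \<le> m" unfolding m_def by (rule measure_nonneg)
    ultimately have "m > 0" by linarith
    then obtain N where "measure lborel (ball x0 \<delta>) < real N * m"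
      using reals_Archimedean3 by blast
    with Nm[of N] show False by simp
  qed
  then have "emeasure lborel Z = 0"
    using emeasure_eq_ennreal_measure[of lborel Z] Zfin by (simp add: m_def)
  then show ?thesis using Zm e by (intro exI[of _ e]) (auto simp: Z_def null_sets_def)
qed

lemma frontier_null:
  fixes O0 :: "'a::euclidean_space set"
  assumes O0: "open O0" "smooth_boundary O0"
  shows "frontier O0 \<in> null_sets lborel"
proof -
  define \<F> where "\<F> = {ball x e | x e. e > 0 \<and> frontier O0 \<inter> ball x e \<in> null_sets lborel}"
  have op: "\<And>S. S \<in> \<F> \<Longrightarrow> open S" by (auto simp: \<F>_def)
  obtain \<F>' where F': "\<F>' \<subseteq> \<F>" "countable \<F>'" "\<Union>\<F>' = \<Union>\<F>"
    using Lindelof[OF op] by blast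
  have cover: "frontier O0 \<subseteq> \<Union>\<F>"
  proof
    fix x assume x: "x \<in> frontier O0"
    then obtain U \<rho> where h: "open U" "x \<in> U" "smooth_on U \<rho>" "\<forall>x\<in>U. grad \<rho> x \<noteq> 0" "O0 \<inter> U = {x\<in>U. \<rho> x < 0}"
      using O0(2) unfolding smooth_boundary_def by blast
    note fl = frontier_local_null[OF O0(1) x h(1) h(2) h(3) h(4) h(5)]
    then obtain e where e: "e > 0" "frontier O0 \<inter> ball x e \<in> null_sets lborel"
      by blast
    then have "ball x e \<in> \<F>" unfolding \<F>_def by blast
    moreover have "x \<in> ball x e" using e(1) by simp
    ultimately show "x \<in> \<Union>\<F>" by blast
  qed
  have "frontier O0 = (\<Union>V\<in>\<F>'. frontier O0 \<inter> V)"
    using cover F'(3) by blast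
  also have "\<dots> \<in> null_sets lborel"
  proof (rule null_sets_UN'[OF F'(2)])
    fix V assume "V \<in> \<F>'"
    then have "V \<in> \<F>" using F' by blast
    then show "frontier O0 \<inter> V \<in> null_sets lborel" unfolding \<F>_def by blast
  qed
  finally show ?thesis .
qed

lemma ps_lborel: "pair_sigma_finite (lborel :: 'x::euclidean_space measure) (lborel :: 'y::euclidean_space measure)"
  by (simp add: pair_sigma_finite_def sigma_finite_lborel)

lemma AE_snd_lift:
  fixes P :: "'a::euclidean_space \<Rightarrow> bool"
  assumes "AE x in lborel. P x"
  shows "AE z in (lborel :: (real \<times> 'a) measure). P (snd z)"
proof -
  obtain N where N: "{x \<in> space lborel. \<not> P x} \<subseteq> N" "emeasure lborel N = 0" "N \<in> sets lborel"
    using AE_E[OF assms] by blast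
  have m: "UNIV \<times> N \<in> sets (lborel \<Otimes>\<^sub>M (lborel :: 'a measure))"
    using N(3) by (intro pair_measureI) auto
  have "emeasure (lborel \<Otimes>\<^sub>M (lborel :: 'a measure)) (UNIV \<times> N) = emeasure (lborel :: real measure) UNIV * emeasure lborel N"
    using N(3) by (simp add: lborel.emeasure_pair_measure_Times)
  then have "emeasure (lborel \<Otimes>\<^sub>M (lborel :: 'a measure)) (UNIV \<times> N) = 0" using N(2) by simp
  then have e0: "emeasure (lborel :: (real \<times> 'a) measure) (UNIV \<times> N) = 0"
    by (simp only: lborel_prod)
  have m': "UNIV \<times> N \<in> sets (lborel :: (real \<times> 'a) measure)"
    using m by (simp only: lborel_prod)
  have "UNIV \<times> N \<in> null_sets (lborel :: (real \<times> 'a) measure)"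
    using e0 m' by (simp add: null_sets_def)
  then show ?thesis
    by (rule AE_I') (use N(1) in auto)
qed

lemma AE_fubini:
  fixes Q :: "real \<times> 'a::euclidean_space \<Rightarrow> bool"
  assumes "AE z in (lborel :: (real \<times> 'a) measure). Q z"
  shows "AE t in lborel. AE x in lborel. Q (t, x)"
proof -
  have "AE z in (lborel :: real measure) \<Otimes>\<^sub>M (lborel :: 'a measure). Q z"
    using assms by (simp only: lborel_prod)
  then show ?thesis by (rule pair_sigma_finite.AE_pair[OF ps_lborel])
qed

lemma bump_SF:
  fixes z0 :: "'b::euclidean_space"
  shows "(\<lambda>z. Ef 0 (r\<^sup>2 - (z - z0) \<bullet> (z - z0))) \<in> SF"
proof -
  have "(\<lambda>z. (r\<^sup>2 - z0 \<bullet> z0) + ((-1) * (z \<bullet> z) + 2 * (z \<bullet> z0))) \<in> SF"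
    by (intro SF.add SF.mult SF.const SF.sq SF.lin[OF bounded_linear_inner_left])
  moreover have "(\<lambda>z. (r\<^sup>2 - z0 \<bullet> z0) + ((-1) * (z \<bullet> z) + 2 * (z \<bullet> z0))) = (\<lambda>z. r\<^sup>2 - (z - z0) \<bullet> (z - z0))"
  proof
    fix z
    have "(z - z0) \<bullet> (z - z0) = (z \<bullet> z - z \<bullet> z0) - (z0 \<bullet> z - z0 \<bullet> z0)"
      by (simp only: inner_diff_left inner_diff_right)
    moreover have "z0 \<bullet> z = z \<bullet> z0" by (rule inner_commute)
    ultimately show "(r\<^sup>2 - z0 \<bullet> z0) + ((-1) * (z \<bullet> z) + 2 * (z \<bullet> z0)) = r\<^sup>2 - (z - z0) \<bullet> (z - z0)"
      by linarith
  qed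
  ultimately have "(\<lambda>z. r\<^sup>2 - (z - z0) \<bullet> (z - z0)) \<in> SF" by simp
  then show ?thesis by (rule SF.comp)
qed

lemma inner_self_dist: "(z - z0) \<bullet> (z - z0) = (dist z z0)\<^sup>2"
  by (simp add: dist_norm power2_norm_eq_inner)

lemma bump_support:
  fixes z0 :: "'b::euclidean_space"
  assumes r: "r > 0"
  shows "{z. Ef 0 (r\<^sup>2 - (z - z0) \<bullet> (z - z0)) \<noteq> 0} = ball z0 r"
proof -
  have h: "Ef 0 (r\<^sup>2 - (z - z0) \<bullet> (z - z0)) \<noteq> 0 \<longleftrightarrow> dist z0 z < r" for z
  proof -
    have "Ef 0 (r\<^sup>2 - (z - z0) \<bullet> (z - z0)) \<noteq> 0 \<longleftrightarrow> 0 < r\<^sup>2 - (z - z0) \<bullet> (z - z0)"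
      using Ef0_nonneg[of "r\<^sup>2 - (z - z0) \<bullet> (z - z0)"] Ef0_pos_iff[of "r\<^sup>2 - (z - z0) \<bullet> (z - z0)"]
      by linarith
    also have "\<dots> \<longleftrightarrow> (dist z z0)\<^sup>2 < r\<^sup>2"
      unfolding inner_self_dist by linarith
    also have "\<dots> \<longleftrightarrow> dist z z0 < r"
    proof
      assume "(dist z z0)\<^sup>2 < r\<^sup>2"
      then show "dist z z0 < r" by (rule power2_less_imp_less) (use r in linarith)
    next
      assume "dist z z0 < r"
      then show "(dist z z0)\<^sup>2 < r\<^sup>2" by (rule power_strict_mono[OF _ zero_le_dist]) simp
    qed
    finally show ?thesis by (metis dist_commute)
  qed
  show ?thesis by (rule set_eqI) (simp only: mem_Collect_eq mem_ball h)
qed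

lemma bump_lower:
  fixes z0 :: "'b::euclidean_space"
  assumes r: "r > 0" and z: "z \<in> ball z0 (r/2)"
  shows "Ef 0 (3 * r\<^sup>2 / 4) \<le> Ef 0 (r\<^sup>2 - (z - z0) \<bullet> (z - z0))"
proof (rule Ef0_mono)
  show "0 < 3 * r\<^sup>2 / 4" using r by simp
  have "dist z z0 < r/2" using z by (simp add: dist_commute)
  then have "(dist z z0)\<^sup>2 \<le> (r/2)\<^sup>2" by (intro power_mono) auto
  then show "3 * r\<^sup>2 / 4 \<le> r\<^sup>2 - (z - z0) \<bullet> (z - z0)"
    by (simp add: inner_self_dist power_divide)
qed

lemma gradx_cont:
  assumes "\<psi> \<in> SF"
  shows "continuous_on UNIV (gradx \<psi>)"
proof -
  have "continuous_on UNIV (\<lambda>z. \<Sum>i\<in>Basis. frechet_derivative \<psi> (at z) (0, i) *\<^sub>R i)"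
    by (intro continuous_intros SF_cont SF_fderiv assms)
  then show ?thesis by (simp add: gradx_def[abs_def])
qed

theorem lemma2p4:
  fixes \<Omega> \<Omega>0 :: "'a::euclidean_space set"
    and a :: real and b u0 :: "'a \<Rightarrow> real"
    and p :: "nat \<Rightarrow> real"
    and U :: "nat \<Rightarrow> real \<Rightarrow> 'a \<Rightarrow> real" and GU :: "nat \<Rightarrow> real \<Rightarrow> 'a \<Rightarrow> 'a"
    and DU :: "nat \<Rightarrow> real \<Rightarrow> 'a \<Rightarrow> real"
    and u :: "real \<Rightarrow> 'a \<Rightarrow> real" and Gu :: "real \<Rightarrow> 'a \<Rightarrow> 'a" and Du :: "real \<Rightarrow> 'a \<Rightarrow> real"
  assumes dom: "smooth_domain \<Omega>"
    and a_pos: "a > 0"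
    and b_Linf: "Linfty_on \<Omega> b"
    and b_nonneg: "AE x in lborel. x \<in> \<Omega> \<longrightarrow> b x \<ge> 0"
    and Omega0: "open \<Omega>0" "smooth_boundary \<Omega>0"
    and b_zero: "AE x in lborel. x \<in> \<Omega> \<inter> \<Omega>0 \<longrightarrow> b x = 0"
    and b_pos: "\<And>\<Omega>'. open \<Omega>' \<Longrightarrow> compact (closure \<Omega>') \<Longrightarrow> closure \<Omega>' \<subseteq> \<Omega> - \<Omega>0 \<Longrightarrow>
                  \<exists>bl>0. AE x in lborel. x \<in> \<Omega>' \<longrightarrow> b x \<ge> bl"
    and u0_H01: "H01 \<Omega> u0" and u0_Linf: "Linfty_on \<Omega> u0"
    and u0_bounds: "AE x in lborel. x \<in> \<Omega> - \<Omega>0 \<longrightarrow> 0 \<le> u0 x \<and> u0 x \<le> 1"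
    and p_gt1: "\<And>k. p k > 1"
    and p_lim: "filterlim p at_top sequentially"
    and sol: "\<And>k. global_solution \<Omega> a b (p k) u0 (U k) (GU k) (DU k)"
    and lim_u: "\<And>T. T > 0 \<Longrightarrow> L2H01 \<Omega> T u Gu \<and> time_deriv \<Omega> T u Du"
    and strong: "\<And>T. T > 0 \<Longrightarrow>
       (\<lambda>k. LINT z:cyl \<Omega> T|lborel. (U k (fst z) (snd z) - u (fst z) (snd z))\<^sup>2) \<longlonglongrightarrow> 0"
    and weak_u: "\<And>T. T > 0 \<Longrightarrow>
       weak_L2 (cyl \<Omega> T) (\<lambda>k z. U k (fst z) (snd z)) (\<lambda>z. u (fst z) (snd z))"
    and weak_grad: "\<And>T. T > 0 \<Longrightarrow>
       weak_L2v (cyl \<Omega> T) (\<lambda>k z. GU k (fst z) (snd z)) (\<lambda>z. Gu (fst z) (snd z))"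
    and weak_dt: "\<And>T. T > 0 \<Longrightarrow>
       weak_L2 (cyl \<Omega> T) (\<lambda>k z. DU k (fst z) (snd z)) (\<lambda>z. Du (fst z) (snd z))"
  shows "AE t in lborel. t > 0 \<longrightarrow> u t \<in> K0 \<Omega> \<Omega>0"
proof -
  have \<Omega>o: "open \<Omega>" and \<Omega>b: "bounded \<Omega>" using dom by (auto simp: smooth_domain_def)
  have cylo: "open (cyl \<Omega> T)" for T
    unfolding cyl_def using \<Omega>o by (intro open_Times) auto
  have cylm: "cyl \<Omega> T \<in> sets lborel" for T
    using cylo[of T] by (intro lborelD borel_open)
  have cylb: "bounded (cyl \<Omega> T)" for T
    unfolding cyl_def using \<Omega>b by (intro bounded_Times) auto
  have cylf: "emeasure lborel (cyl \<Omega> T) < \<infinity>" for T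
    using emeasure_bounded_finite[OF cylb] by simp
  have cyl_snd: "z \<in> cyl \<Omega> T \<Longrightarrow> snd z \<in> \<Omega>" for z T by (auto simp: cyl_def)
  obtain Mb where Mb: "AE x in lborel. x \<in> \<Omega> \<longrightarrow> \<bar>b x\<bar> \<le> Mb"
    using b_Linf unfolding Linfty_on_def by blast
  have bm: "(\<lambda>x. indicator \<Omega> x *\<^sub>R b x) \<in> borel_measurable lborel"
    using b_Linf unfolding Linfty_on_def set_borel_measurable_def by blast
  have bAE: "AE z in (lborel :: (real \<times> 'a) measure). snd z \<in> \<Omega> \<longrightarrow> 0 \<le> b (snd z) \<and> b (snd z) \<le> Mb"
  proof (rule AE_snd_lift)
    show "AE x in lborel. x \<in> \<Omega> \<longrightarrow> 0 \<le> b x \<and> b x \<le> Mb"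
      using Mb b_nonneg by eventually_elim auto
  qed
  have snd_m: "(snd :: real \<times> 'a \<Rightarrow> 'a) \<in> measurable lborel lborel"
    using borel_measurable_continuous_onI[OF continuous_on_snd[OF continuous_on_id]]
    by (simp add: measurable_lborel1)
  have bsbm: "set_borel_measurable lborel (cyl \<Omega> T) (\<lambda>z. b (snd z))" for T
  proof -
    have c: "(\<lambda>z. indicator \<Omega> (snd z) *\<^sub>R b (snd z)) \<in> borel_measurable (lborel :: (real \<times> 'a) measure)"
      using measurable_compose[OF snd_m bm] by simp
    have e: "(\<lambda>z. indicator (cyl \<Omega> T) z *\<^sub>R b (snd z)) = (\<lambda>z. indicator (cyl \<Omega> T) z *\<^sub>R (indicator \<Omega> (snd z) *\<^sub>R b (snd z)))"
      using cyl_snd by (auto simp: fun_eq_iff indicator_def)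
    show ?thesis unfolding set_borel_measurable_def
      using borel_measurable_scaleR[OF borel_measurable_indicator[OF cylm] c] by (subst e)
  qed
  have pP: "0 < p k" for k using p_gt1[of k] by simp
  define uu where "uu z = u (fst z) (snd z)" for z
  have local: "\<exists>r>0. AE z in lborel. z \<in> ball (t0, x0) r \<longrightarrow> uu z \<le> 1"
    if t0: "t0 > 0" and x0: "x0 \<in> \<Omega> - closure \<Omega>0" for t0 x0
  proof -
    have "open (\<Omega> - closure \<Omega>0)" using \<Omega>o by auto
    then obtain e where e: "e > 0" "cball x0 e \<subseteq> \<Omega> - closure \<Omega>0"
      using x0 unfolding open_contains_cball by blast
    have cl: "closure (ball x0 e) \<subseteq> \<Omega> - \<Omega>0"
      using e closure_subset[of \<Omega>0] by (auto simp: closure_ball)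
    obtain bl where bl: "bl > 0" "AE x in lborel. x \<in> ball x0 e \<longrightarrow> bl \<le> b x"
      using b_pos[OF open_ball _ cl] e(1) by (auto simp: closure_ball)
    define r where "r = min e (t0/2)"
    define T where "T = 2 * t0"
    define z0 where "z0 = (t0, x0)"
    define S where "S = cyl \<Omega> T"
    define \<psi> where "\<psi> z = Ef 0 (r\<^sup>2 - (z - z0) \<bullet> (z - z0))" for z
    define B where "B = ball z0 (r/2)"
    have r: "r > 0" using e t0 by (simp add: r_def)
    have T: "T > 0" using t0 by (simp add: T_def)
    have cb: "cball z0 r \<subseteq> S"
    proof
      fix z assume "z \<in> cball z0 r"
      then have d: "dist z0 z \<le> r" by simp
      have d1: "dist t0 (fst z) \<le> r" using dist_fst_le[of z0 z] d by (simp add: z0_def)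
      have d2: "dist x0 (snd z) \<le> r" using dist_snd_le[of z0 z] d by (simp add: z0_def)
      have "dist t0 (fst z) \<le> t0 / 2" using d1 by (simp add: r_def)
      then have h: "\<bar>t0 - fst z\<bar> \<le> t0 / 2" by (simp only: dist_real_def)
      have "t0 - fst z \<le> t0 / 2" "- (t0 - fst z) \<le> t0 / 2" by (rule abs_le_D1[OF h], rule abs_le_D2[OF h])
      then have "fst z \<in> {0<..<T}" using t0 by (simp add: T_def)
      moreover have "snd z \<in> \<Omega>" using d2 e(2) by (auto simp: r_def)
      ultimately show "z \<in> S" by (auto simp: S_def cyl_def mem_Times_iff)
    qed
    have Bsub: "B \<subseteq> S" using cb r by (auto simp: B_def)
    have Bm: "B \<in> sets lborel" by (simp add: B_def)
    have \<psi>SF: "\<psi> \<in> SF" unfolding \<psi>_def[abs_def] by (rule bump_SF)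
    have test: "test_fun S \<psi>"
    proof -
      have "{x. \<psi> x \<noteq> 0} = ball z0 r" unfolding \<psi>_def by (rule bump_support[OF r])
      then have "closure {x. \<psi> x \<noteq> 0} = cball z0 r" using r by (simp add: closure_ball)
      then show ?thesis unfolding test_fun_def using SF_smooth[OF \<psi>SF] cb by simp
    qed
    have \<psi>L2: "L2_on S \<psi>"
      unfolding S_def by (rule L2_cont[OF SF_cont[OF \<psi>SF] cylm cylb])
    have \<Psi>L2: "L2v_on S (gradx \<psi>)"
      unfolding S_def by (rule L2v_cont[OF gradx_cont[OF \<psi>SF] cylm cylb])
    have \<delta>: "Ef 0 (3 * r\<^sup>2 / 4) > 0" using r by (simp add: Ef0_pos_iff)
    have \<delta>B: "\<And>z. z \<in> B \<Longrightarrow> Ef 0 (3 * r\<^sup>2 / 4) \<le> \<psi> z"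
      unfolding \<psi>_def B_def by (rule bump_lower[OF r])
    have solT: "L2H01 \<Omega> T (U k) (GU k) \<and> time_deriv \<Omega> T (U k) (DU k) \<and>
        Linfty_on (cyl \<Omega> T) (\<lambda>z. U k (fst z) (snd z)) \<and>
        (\<forall>\<psi>. test_fun (cyl \<Omega> T) \<psi> \<longrightarrow>
           (LINT z:cyl \<Omega> T|lborel. DU k (fst z) (snd z) * \<psi> z + GU k (fst z) (snd z) \<bullet> gradx \<psi> z)
           = (LINT z:cyl \<Omega> T|lborel.
                (a * U k (fst z) (snd z) - b (snd z) * U k (fst z) (snd z) powr p k) * \<psi> z))" for k
      using sol[of k] T unfolding global_solution_def by blast
    have posU: "AE z in lborel. z \<in> S \<longrightarrow> 0 \<le> U k (fst z) (snd z)" for k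
    proof -
      have "AE z in lborel. z \<in> {0<..} \<times> \<Omega> \<longrightarrow> U k (fst z) (snd z) \<ge> 0"
        using sol[of k] unfolding global_solution_def by blast
      then show ?thesis by eventually_elim (auto simp: S_def cyl_def)
    qed
    have "AE z in lborel. z \<in> B \<longrightarrow> uu z \<le> 1"
    proof (rule key_conclusion[where S=S and \<psi>=\<psi> and \<Psi>="gradx \<psi>" and \<beta>="\<lambda>z. b (snd z)"
          and U="\<lambda>k z. U k (fst z) (snd z)" and D="\<lambda>k z. DU k (fst z) (snd z)"
          and G="\<lambda>k z. GU k (fst z) (snd z)" and p=p and a=a and \<delta>="Ef 0 (3 * r\<^sup>2 / 4)"
          and Mb=Mb and bl=bl])
      show "S \<in> sets lborel" unfolding S_def by (rule cylm)
      show "emeasure lborel S < \<infinity>" unfolding S_def by (rule cylf)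
      show "B \<in> sets lborel" by (rule Bm)
      show "B \<subseteq> S" by (rule Bsub)
      show "L2_on S \<psi>" by (rule \<psi>L2)
      show "\<And>z. 0 \<le> \<psi> z" by (simp add: \<psi>_def Ef0_nonneg)
      show "\<And>z. \<psi> z \<le> 1" by (simp add: \<psi>_def Ef0_le1)
      show "L2v_on S (gradx \<psi>)" by (rule \<Psi>L2)
      show "0 < Ef 0 (3 * r\<^sup>2 / 4)" by (rule \<delta>)
      show "\<And>z. z \<in> B \<Longrightarrow> Ef 0 (3 * r\<^sup>2 / 4) \<le> \<psi> z" by (rule \<delta>B)
      show "set_borel_measurable lborel S (\<lambda>z. b (snd z))" unfolding S_def by (rule bsbm)
      show "AE z in lborel. z \<in> S \<longrightarrow> 0 \<le> b (snd z) \<and> b (snd z) \<le> Mb"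
        using bAE by eventually_elim (auto simp: S_def cyl_def)
      show "0 < bl" by (rule bl(1))
      show "AE z in lborel. z \<in> B \<longrightarrow> bl \<le> b (snd z)"
      proof -
        have "AE z in (lborel :: (real \<times> 'a) measure). snd z \<in> ball x0 e \<longrightarrow> bl \<le> b (snd z)"
          by (rule AE_snd_lift[OF bl(2)])
        then show ?thesis
        proof eventually_elim
          case (elim z)
          show ?case
          proof
            assume "z \<in> B"
            then have "dist z0 z < r/2" by (simp add: B_def)
            then have "dist x0 (snd z) < e"
              using dist_snd_le[of z0 z] r by (simp add: z0_def r_def)
            then show "bl \<le> b (snd z)" using elim by simp
          qed
        qed
      qed
      show "\<And>k. L2_on S (\<lambda>z. U k (fst z) (snd z))"
        using solT unfolding L2H01_def S_def by blast
      show "\<And>k. \<exists>M. AE z in lborel. z \<in> S \<longrightarrow> \<bar>U k (fst z) (snd z)\<bar> \<le> M"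
        using solT unfolding Linfty_on_def S_def by blast
      show "\<And>k. AE z in lborel. z \<in> S \<longrightarrow> 0 \<le> U k (fst z) (snd z)" by (rule posU)
      show "\<And>k. L2_on S (\<lambda>z. DU k (fst z) (snd z))"
        using solT unfolding time_deriv_def S_def by blast
      show "\<And>k. L2v_on S (\<lambda>z. GU k (fst z) (snd z))"
        using solT unfolding L2H01_def S_def by blast
      show "\<And>k. (LINT z:S|lborel. DU k (fst z) (snd z) * \<psi> z + GU k (fst z) (snd z) \<bullet> gradx \<psi> z)
           = (LINT z:S|lborel. (a * U k (fst z) (snd z) - b (snd z) * U k (fst z) (snd z) powr p k) * \<psi> z)"
        using solT test unfolding S_def by blast
      show "convergent (\<lambda>k. LINT z:S|lborel. U k (fst z) (snd z) * \<psi> z)"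
        using weak_u[OF T] \<psi>L2 unfolding weak_L2_def S_def convergent_def by blast
      show "convergent (\<lambda>k. LINT z:S|lborel. DU k (fst z) (snd z) * \<psi> z)"
        using weak_dt[OF T] \<psi>L2 unfolding weak_L2_def S_def convergent_def by blast
      show "convergent (\<lambda>k. LINT z:S|lborel. GU k (fst z) (snd z) \<bullet> gradx \<psi> z)"
        using weak_grad[OF T] \<Psi>L2 unfolding weak_L2v_def S_def convergent_def by blast
      show "L2_on S uu"
        using lim_u[OF T] unfolding L2H01_def S_def uu_def by blast
      show "(\<lambda>k. LINT z:S|lborel. (U k (fst z) (snd z) - uu z)\<^sup>2) \<longlonglongrightarrow> 0"
        using strong[OF T] unfolding S_def uu_def by simp
      show "filterlim p at_top sequentially" by (rule p_lim)
      show "\<And>k. 0 < p k" by (rule pP)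
    qed
    then show ?thesis using r unfolding B_def z0_def by (intro exI[of _ "r/2"]) auto
  qed
  define \<F> where "\<F> = {ball z r | z r. r > 0 \<and> (AE y in lborel. y \<in> ball z r \<longrightarrow> uu y \<le> 1)}"
  have op: "\<And>V. V \<in> \<F> \<Longrightarrow> open V" by (auto simp: \<F>_def)
  obtain \<F>' where F': "\<F>' \<subseteq> \<F>" "countable \<F>'" "\<Union>\<F>' = \<Union>\<F>"
    using Lindelof[OF op] by blast
  have Gsub: "z \<in> \<Union>\<F>" if hz: "fst z > 0" "snd z \<in> \<Omega> - closure \<Omega>0" for z
  proof -
    obtain r where r: "r > 0" "AE y in lborel. y \<in> ball (fst z, snd z) r \<longrightarrow> uu y \<le> 1"
      using local[OF hz] by blast
    have r2: "AE y in lborel. y \<in> ball z r \<longrightarrow> uu y \<le> 1" using r(2) by simp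
    have "ball z r \<in> \<F>" unfolding \<F>_def using r(1) r2 by blast
    moreover have "z \<in> ball z r" using r by simp
    ultimately show ?thesis by blast
  qed
  have AE1: "AE y in lborel. \<forall>V\<in>\<F>'. y \<in> V \<longrightarrow> uu y \<le> 1"
  proof (subst AE_ball_countable[OF F'(2)], intro ballI)
    fix V assume "V \<in> \<F>'"
    then have "V \<in> \<F>" using F' by blast
    then show "AE y in lborel. y \<in> V \<longrightarrow> uu y \<le> 1" unfolding \<F>_def by blast
  qed
  have fr: "frontier \<Omega>0 \<in> null_sets lborel" by (rule frontier_null[OF Omega0])
  have AE2: "AE y in (lborel :: (real \<times> 'a) measure). snd y \<notin> frontier \<Omega>0"
    by (rule AE_snd_lift) (rule AE_not_in[OF fr])
  have AEz: "AE z in (lborel :: (real \<times> 'a) measure). fst z > 0 \<and> snd z \<in> \<Omega> - \<Omega>0 \<longrightarrow> uu z \<le> 1"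
    using AE1 AE2
  proof eventually_elim
    case (elim z)
    show ?case
    proof
      assume h: "fst z > 0 \<and> snd z \<in> \<Omega> - \<Omega>0"
      then have "snd z \<notin> closure \<Omega>0"
        using elim(2) by (simp add: closure_Un_frontier)
      then have "z \<in> \<Union>\<F>" using Gsub h by auto
      then obtain V where "V \<in> \<F>'" "z \<in> V" using F'(3) by blast
      then show "uu z \<le> 1" using elim(1) by blast
    qed
  qed
  have K2: "AE t in lborel. AE x in lborel. (t > 0 \<and> x \<in> \<Omega> - \<Omega>0 \<longrightarrow> u t x \<le> 1)"
    using AE_fubini[OF AEz] by (simp add: uu_def)
  have H1: "AE t in lborel. \<forall>n. t \<in> {0<..<real (Suc n)} \<longrightarrow> H01_grad \<Omega> (u t) (Gu t)"
    unfolding AE_all_countable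
  proof
    fix n
    have "real (Suc n) > 0" by simp
    then show "AE t in lborel. t \<in> {0<..<real (Suc n)} \<longrightarrow> H01_grad \<Omega> (u t) (Gu t)"
      using lim_u unfolding L2H01_def by blast
  qed
  show ?thesis
    using K2 H1
  proof eventually_elim
    case (elim t)
    show ?case
    proof
      assume t: "t > 0"
      obtain n where "t < real (Suc n)"
        using reals_Archimedean2[of t] by (metis less_Suc_eq of_nat_less_iff order_less_trans lessI)
      then have "H01_grad \<Omega> (u t) (Gu t)" using elim(2) t by auto
      then have "H01 \<Omega> (u t)" unfolding H01_def by blast
      moreover have "AE x in lborel. x \<in> \<Omega> - \<Omega>0 \<longrightarrow> u t x \<le> 1"
        using elim(1) by eventually_elim (use t in auto)
      ultimately show "u t \<in> K0 \<Omega> \<Omega>0" unfolding K0_def by blast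
    qed
  qed
qed

end
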